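(* $H$ is constant on each connected component of $\Gamma$.
   Context: Let $G=(\mathbb{V},E)$ be a finite graph with adjacency $\sim$. Let $a_{ij}=a_{ji}\ge0$ ($>0$ only if $i\sim j$) and $p_{ij}=p_{ji}\in[0,1]$ ($=0$ if $i\not\sim j$), with some $a_{ij}p_{ij}>0$. Fix $h_1\in(0,1]$; $\Delta$ is the set of arrays $x=(x_{ij})_{i,j\in\mathbb{V}}$ with $x_{ij}=x_{ji}\ge0$, $x_{ij}=0$ if $i\not\sim j$, $\sum_{i,j}x_{ij}=1$, $\sum_{(i,j):a_{ij}p_{ij}>0}x_{ij}\ge h_1$; $x_i=\sum_jx_{ij}$. $H(x)=\sum_{(i,j):x_{ij}>0}a_{ij}p_{ij}x_{ij}^2/(x_ix_j)$; $F(x)_{ij}=x_{ij}\big(a_{ij}p_{ij}\frac{x_{ij}}{x_ix_j}-H(x)\big)$, with $F_{ij}=0$ if $x_{ij}=0$ and $a_{ij}p_{ij}x_{ij}/(x_ix_j):=0$ if $a_{ij}p_{ij}=0$. $\Gamma=\{x\in\Delta:F(x)=0\}$ (with the topology induced from $\mathbb{R}^{\mathbb{V}\times\mathbb{V}}$). *)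

theory Defs
  imports "HOL-Analysis.Analysis"
begin

text \<open>Arrays x = (x_ij) indexed by V x V are functions on pairs of vertices,
  carrying the product (= Euclidean, since V is finite) topology.\<close>

definition vdeg :: "('v::finite \<times> 'v \<Rightarrow> real) \<Rightarrow> 'v \<Rightarrow> real" where
  "vdeg x i = (\<Sum>j\<in>UNIV. x (i, j))"

definition Hfun :: "('v::finite \<Rightarrow> 'v \<Rightarrow> real) \<Rightarrow> ('v \<Rightarrow> 'v \<Rightarrow> real)
    \<Rightarrow> ('v \<times> 'v \<Rightarrow> real) \<Rightarrow> real" where
  "Hfun a p x = (\<Sum>(i,j)\<in>{(i,j). x (i,j) > 0}.
      a i j * p i j * (x (i,j))\<^sup>2 / (vdeg x i * vdeg x j))"

definition ratio :: "('v::finite \<Rightarrow> 'v \<Rightarrow> real) \<Rightarrow> ('v \<Rightarrow> 'v \<Rightarrow> real)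
    \<Rightarrow> ('v \<times> 'v \<Rightarrow> real) \<Rightarrow> 'v \<Rightarrow> 'v \<Rightarrow> real" where
  "ratio a p x i j = (if a i j * p i j = 0 then 0
      else a i j * p i j * x (i,j) / (vdeg x i * vdeg x j))"

definition Ffun :: "('v::finite \<Rightarrow> 'v \<Rightarrow> real) \<Rightarrow> ('v \<Rightarrow> 'v \<Rightarrow> real)
    \<Rightarrow> ('v \<times> 'v \<Rightarrow> real) \<Rightarrow> ('v \<times> 'v \<Rightarrow> real)" where
  "Ffun a p x = (\<lambda>(i,j). if x (i,j) = 0 then 0
      else x (i,j) * (ratio a p x i j - Hfun a p x))"

definition Delta :: "('v::finite \<Rightarrow> 'v \<Rightarrow> bool) \<Rightarrow> ('v \<Rightarrow> 'v \<Rightarrow> real)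
    \<Rightarrow> ('v \<Rightarrow> 'v \<Rightarrow> real) \<Rightarrow> real \<Rightarrow> ('v \<times> 'v \<Rightarrow> real) set" where
  "Delta adj a p h1 = {x.
      (\<forall>i j. x (i,j) = x (j,i)) \<and> (\<forall>i j. x (i,j) \<ge> 0) \<and>
      (\<forall>i j. \<not> adj i j \<longrightarrow> x (i,j) = 0) \<and>
      (\<Sum>ij\<in>UNIV. x ij) = 1 \<and>
      (\<Sum>(i,j)\<in>{(i,j). a i j * p i j > 0}. x (i,j)) \<ge> h1}"

definition Gamma :: "('v::finite \<Rightarrow> 'v \<Rightarrow> bool) \<Rightarrow> ('v \<Rightarrow> 'v \<Rightarrow> real)
    \<Rightarrow> ('v \<Rightarrow> 'v \<Rightarrow> real) \<Rightarrow> real \<Rightarrow> ('v \<times> 'v \<Rightarrow> real) set" where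
  "Gamma adj a p h1 = {x \<in> Delta adj a p h1. Ffun a p x = (\<lambda>_. 0)}"

end

theory Submission
  imports Defs
begin

lemma sum_pairs:
  fixes f :: "'v::finite \<times> 'v \<Rightarrow> real"
  shows "(\<Sum>ij\<in>UNIV. f ij) = (\<Sum>i\<in>UNIV. \<Sum>j\<in>UNIV. f (i,j))"
proof -
  have "(\<Sum>i\<in>UNIV. \<Sum>j\<in>UNIV. f (i,j)) = (\<Sum>(i,j)\<in>UNIV\<times>UNIV. f (i,j))"
    by (rule sum.cartesian_product)
  then show ?thesis by (simp add: case_prod_eta)
qed

lemma vdeg_ge:
  assumes "\<forall>i j. x (i,j) \<ge> (0::real)"
  shows "x (i,j) \<le> vdeg x i"
  unfolding vdeg_def by (rule member_le_sum) (simp_all add: assms)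

lemma vdeg_nonneg:
  assumes "\<forall>i j. x (i,j) \<ge> (0::real)"
  shows "0 \<le> vdeg x i"
  unfolding vdeg_def by (rule sum_nonneg) (simp_all add: assms)

lemma vdeg_pos_iff:
  assumes "\<forall>i j. x (i,j) \<ge> (0::real)"
  shows "vdeg x i > 0 \<longleftrightarrow> (\<exists>j. x (i,j) > 0)"
proof
  assume "vdeg x i > 0"
  show "\<exists>j. x (i,j) > 0"
  proof (rule ccontr)
    assume "\<not> ?thesis"
    hence "vdeg x i \<le> 0" unfolding vdeg_def by (intro sum_nonpos) (simp_all add: not_less)
    with \<open>vdeg x i > 0\<close> show False by simp
  qed
next
  assume "\<exists>j. x (i,j) > 0"
  then obtain j where "x (i,j) > 0" by blast
  with vdeg_ge[OF assms, of i j] show "vdeg x i > 0" by simp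
qed

lemma ratio_eq:
  assumes "x \<in> Gamma adj a p h1" "x (i,j) \<noteq> 0"
  shows "ratio a p x i j = Hfun a p x"
proof -
  have "Ffun a p x (i,j) = 0" using assms(1) unfolding Gamma_def by simp
  with assms(2) show ?thesis unfolding Ffun_def by simp
qed

lemma H_pos:
  assumes x: "x \<in> Gamma adj a p h1" and c: "\<And>i j. 0 \<le> a i j * p i j" and h1: "0 < h1"
  shows "Hfun a p x > 0"
proof -
  have D: "x \<in> Delta adj a p h1" using x unfolding Gamma_def by simp
  hence nn: "\<forall>i j. x (i,j) \<ge> 0" and sy: "\<forall>i j. x (i,j) = x (j,i)"
    and s: "(\<Sum>(i,j)\<in>{(i,j). a i j * p i j > 0}. x (i,j)) \<ge> h1"
    unfolding Delta_def by auto
  obtain k l where kl: "a k l * p k l > 0" "x (k,l) > 0"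
  proof (rule ccontr)
    assume "\<not> thesis"
    have "\<forall>k l. a k l * p k l > 0 \<longrightarrow> x (k,l) \<le> 0"
    proof (intro allI impI)
      fix k l assume ckl: "a k l * p k l > 0"
      show "x (k,l) \<le> 0"
      proof (rule ccontr)
        assume "\<not> x (k,l) \<le> 0"
        hence "x (k,l) > 0" by simp
        from that[OF ckl this] \<open>\<not> thesis\<close> show False by simp
      qed
    qed
    hence "(\<Sum>(i,j)\<in>{(i,j). a i j * p i j > 0}. x (i,j)) \<le> 0"
      by (intro sum_nonpos) auto
    with s h1 show False by simp
  qed
  have dk: "vdeg x k > 0" using vdeg_ge[OF nn, of k l] kl by simp
  have dl: "vdeg x l > 0" using vdeg_ge[OF nn, of l k] kl sy[rule_format, of k l] by simp
  have "ratio a p x k l = Hfun a p x" using ratio_eq[OF x] kl by simp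
  moreover have "ratio a p x k l > 0"
  proof -
    have ne: "a k l * p k l \<noteq> 0" using kl by linarith
    have "ratio a p x k l = a k l * p k l * x (k,l) / (vdeg x k * vdeg x l)"
      unfolding ratio_def by (rule if_not_P[OF ne])
    also have "\<dots> > 0" by (rule divide_pos_pos[OF mult_pos_pos[OF kl] mult_pos_pos[OF dk dl]])
    finally show ?thesis .
  qed
  ultimately show ?thesis by simp
qed

lemma F1:
  assumes x: "x \<in> Gamma adj a p h1" and c: "\<And>i j. 0 \<le> a i j * p i j" and h1: "0 < h1"
    and xij: "x (i,j) > 0"
  shows "a i j * p i j > 0 \<and> vdeg x i > 0 \<and> vdeg x j > 0 \<and>
         x (i,j) = Hfun a p x * vdeg x i * vdeg x j / (a i j * p i j) \<and>
         Hfun a p x = a i j * p i j * x (i,j) / (vdeg x i * vdeg x j)"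
proof -
  have D: "x \<in> Delta adj a p h1" using x unfolding Gamma_def by simp
  hence nn: "\<forall>i j. x (i,j) \<ge> 0" and sy: "\<forall>i j. x (i,j) = x (j,i)"
    unfolding Delta_def by auto
  have di: "vdeg x i > 0" using vdeg_ge[OF nn, of i j] xij by simp
  have dj: "vdeg x j > 0" using vdeg_ge[OF nn, of j i] xij sy[rule_format, of i j] by simp
  have r: "ratio a p x i j = Hfun a p x" using ratio_eq[OF x] xij by simp
  have hp: "Hfun a p x > 0" using H_pos[OF x c h1] .
  have cne: "a i j * p i j \<noteq> 0"
  proof
    assume "a i j * p i j = 0"
    hence "ratio a p x i j = 0" unfolding ratio_def by simp
    with r hp show False by simp
  qed
  hence cp: "a i j * p i j > 0" using c[of i j] by linarith
  have e: "Hfun a p x = a i j * p i j * x (i,j) / (vdeg x i * vdeg x j)"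
    using r cne unfolding ratio_def by simp
  have "x (i,j) = Hfun a p x * vdeg x i * vdeg x j / (a i j * p i j)"
    using e cne di dj by (simp add: field_simps)
  with cp di dj e show ?thesis by (intro conjI)
qed


lemma Gamma_props:
  assumes "x \<in> Gamma adj a p h1"
  shows "\<forall>i j. x (i,j) \<ge> 0" "\<forall>i j. x (i,j) = x (j,i)" "(\<Sum>ij\<in>UNIV. x ij) = 1"
  using assms unfolding Gamma_def Delta_def by auto

lemma sum_vdeg:
  assumes "x \<in> Gamma adj a p h1"
  shows "(\<Sum>i\<in>UNIV. vdeg x i) = 1"
  using Gamma_props(3)[OF assms] unfolding vdeg_def sum_pairs by simp

lemma same_support:
  assumes x: "x \<in> Gamma adj a p h1" and y: "y \<in> Gamma adj a p h1"
    and c: "\<And>i j. 0 \<le> a i j * p i j" and h1: "0 < h1"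
    and supp: "\<And>ij. (x ij > 0) = (y ij > 0)"
  shows "Hfun a p x = Hfun a p y"
proof -
  define hx where "hx = Hfun a p x"
  define hy where "hy = Hfun a p y"
  define dx where "dx = vdeg x"
  define dy where "dy = vdeg y"
  define cc where "cc = (\<lambda>i j. a i j * p i j)"
  note nx = Gamma_props(1)[OF x] and ny = Gamma_props(1)[OF y]
  note sx = Gamma_props(2)[OF x] and sy = Gamma_props(2)[OF y]
  have dpos: "dx i > 0 \<longleftrightarrow> dy i > 0" for i
    unfolding dx_def dy_def vdeg_pos_iff[OF nx] vdeg_pos_iff[OF ny] using supp by auto
  have dxn: "dx i \<ge> 0" for i unfolding dx_def using vdeg_nonneg[OF nx] .
  have dyn: "dy i \<ge> 0" for i unfolding dy_def using vdeg_nonneg[OF ny] .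
  define t where "t = (\<lambda>(i,j). if x (i,j) > 0 then hx * dx i * (hy * dy j) / cc i j else 0)"
  have A: "t (i,j) = hx * dx i * y (i,j) / dy i" for i j
  proof (cases "x (i,j) > 0")
    case True
    hence yp: "y (i,j) > 0" using supp[of "(i,j)"] by simp
    have "cc i j > 0 \<and> dy i > 0 \<and> dy j > 0 \<and> y (i,j) = hy * dy i * dy j / cc i j"
      using F1[OF y c h1 yp] unfolding dy_def hy_def cc_def by (elim conjE) (intro conjI; assumption)
    thus ?thesis unfolding t_def using True by (simp add: field_simps)
  next
    case False
    hence "\<not> y (i,j) > 0" using supp[of "(i,j)"] by simp
    hence "y (i,j) = 0" using ny by (meson order.antisym not_less)
    thus ?thesis unfolding t_def using False by simp
  qed
  have B: "t (i,j) = hy * dy j * x (i,j) / dx j" for i j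
  proof (cases "x (i,j) > 0")
    case True
    have "cc i j > 0 \<and> dx i > 0 \<and> dx j > 0 \<and> x (i,j) = hx * dx i * dx j / cc i j"
      using F1[OF x c h1 True] unfolding dx_def hx_def cc_def by (elim conjE) (intro conjI; assumption)
    thus ?thesis unfolding t_def using True by (simp add: field_simps)
  next
    case False
    hence "x (i,j) = 0" using nx by (meson order.antisym not_less)
    thus ?thesis unfolding t_def using False by simp
  qed
  have "(\<Sum>ij\<in>UNIV. t ij) = (\<Sum>i\<in>UNIV. \<Sum>j\<in>UNIV. hx * dx i * y (i,j) / dy i)"
    by (simp only: sum_pairs A)
  also have "\<dots> = (\<Sum>i\<in>UNIV. hx * dx i * dy i / dy i)"
  proof (rule sum.cong[OF refl])
    fix i
    show "(\<Sum>j\<in>UNIV. hx * dx i * y (i,j) / dy i) = hx * dx i * dy i / dy i"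
      unfolding sum_divide_distrib[symmetric] sum_distrib_left[symmetric]
      by (simp add: dy_def vdeg_def)
  qed
  also have "\<dots> = (\<Sum>i\<in>UNIV. hx * dx i)"
  proof (rule sum.cong)
    fix i
    show "hx * dx i * dy i / dy i = hx * dx i"
    proof (cases "dy i = 0")
      case True
      hence "dx i = 0" using dpos[of i] dxn[of i] by simp
      thus ?thesis using True by simp
    qed simp
  qed simp
  also have "\<dots> = hx" using sum_vdeg[OF x]
    by (simp add: sum_distrib_left[symmetric] dx_def)
  finally have T1: "(\<Sum>ij\<in>UNIV. t ij) = hx" .
  have "(\<Sum>ij\<in>UNIV. t ij) = (\<Sum>i\<in>UNIV. \<Sum>j\<in>UNIV. hy * dy j * x (i,j) / dx j)"
    unfolding sum_pairs B ..
  also have "\<dots> = (\<Sum>j\<in>UNIV. \<Sum>i\<in>UNIV. hy * dy j * x (i,j) / dx j)"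
    by (rule sum.swap)
  also have "\<dots> = (\<Sum>j\<in>UNIV. hy * dy j * (\<Sum>i\<in>UNIV. x (i,j)) / dx j)"
    unfolding sum_divide_distrib[symmetric] sum_distrib_left[symmetric] ..
  also have "\<dots> = (\<Sum>j\<in>UNIV. hy * dy j * dx j / dx j)"
  proof -
    have "(\<Sum>i\<in>UNIV. x (i,j)) = dx j" for j
      unfolding dx_def vdeg_def by (intro sum.cong refl) (rule sx[rule_format])
    thus ?thesis by simp
  qed
  also have "\<dots> = (\<Sum>j\<in>UNIV. hy * dy j)"
  proof (rule sum.cong)
    fix i
    show "hy * dy i * dx i / dx i = hy * dy i"
    proof (cases "dx i = 0")
      case True
      hence "dy i = 0" using dpos[of i] dyn[of i] by simp
      thus ?thesis using True by simp
    qed simp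
  qed simp
  also have "\<dots> = hy" using sum_vdeg[OF y]
    by (simp add: sum_distrib_left[symmetric] dy_def)
  finally have "(\<Sum>ij\<in>UNIV. t ij) = hy" .
  with T1 show ?thesis unfolding hx_def hy_def by simp
qed

lemma proj_tendsto:
  "((\<lambda>y::'a \<Rightarrow> real. y k) \<longlongrightarrow> x k) (at x within S)"
proof -
  have "continuous_on UNIV (\<lambda>y::'a \<Rightarrow> real. y k)" by simp
  hence "((\<lambda>y::'a \<Rightarrow> real. y k) \<longlongrightarrow> x k) (at x within UNIV)"
    unfolding continuous_on_def by blast
  thus ?thesis by (rule tendsto_within_subset) simp
qed

lemma exists_pos:
  assumes "x \<in> Gamma adj a p h1"
  obtains i j where "x (i,j) > 0"
proof (rule ccontr)
  assume "\<not> thesis"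
  have allnp: "\<forall>ij. x ij \<le> 0"
  proof
    fix ij show "x ij \<le> 0"
    proof (cases ij)
      case (Pair i j)
      show ?thesis
      proof (rule ccontr)
        assume "\<not> x ij \<le> 0"
        hence "x (i,j) > 0" using Pair by simp
        from that[OF this] \<open>\<not> thesis\<close> show False by simp
      qed
    qed
  qed
  have "(\<Sum>ij\<in>UNIV. x ij) \<le> 0" by (intro sum_nonpos) (rule allnp[rule_format])
  with Gamma_props(3)[OF assms] show False by simp
qed

lemma H_cont:
  fixes a p :: "'v::finite \<Rightarrow> 'v \<Rightarrow> real"
  assumes c: "\<And>i j. 0 \<le> a i j * p i j" and h1: "0 < h1"
  shows "continuous_on (Gamma adj a p h1) (Hfun a p)"
  unfolding continuous_on_def
proof
  fix x assume x: "x \<in> Gamma adj a p h1"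
  obtain i j where xij: "x (i,j) > 0" using exists_pos[OF x] by blast
  define g where "g = (\<lambda>y::'v \<times> 'v \<Rightarrow> real. a i j * p i j * y (i,j) / (vdeg y i * vdeg y j))"
  have f1: "a i j * p i j > 0 \<and> vdeg x i > 0 \<and> vdeg x j > 0 \<and>
         x (i,j) = Hfun a p x * vdeg x i * vdeg x j / (a i j * p i j) \<and>
         Hfun a p x = a i j * p i j * x (i,j) / (vdeg x i * vdeg x j)"
    by (rule F1[OF x c h1 xij])
  have vt: "((\<lambda>y. vdeg y k) \<longlongrightarrow> vdeg x k) (at x within Gamma adj a p h1)" for k
    unfolding vdeg_def by (intro tendsto_sum proj_tendsto)
  have "(g \<longlongrightarrow> g x) (at x within Gamma adj a p h1)"
    unfolding g_def
    by (intro tendsto_divide tendsto_mult tendsto_const proj_tendsto vt)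
       (use f1 in simp)
  moreover have gx: "g x = Hfun a p x" unfolding g_def using f1 by (elim conjE) simp
  ultimately have gt: "(g \<longlongrightarrow> Hfun a p x) (at x within Gamma adj a p h1)" by simp
  have op: "open {y::'v \<times> 'v \<Rightarrow> real. 0 < y (i,j)}"
    by (rule open_Collect_less) (simp_all add: continuous_on_const)
  show "(Hfun a p \<longlongrightarrow> Hfun a p x) (at x within Gamma adj a p h1)"
  proof (rule Lim_transform_within_openin[OF gt])
    show "openin (top_of_set (Gamma adj a p h1)) (Gamma adj a p h1 \<inter> {y. 0 < y (i,j)})"
      using op by (rule openin_open_Int)
    show "x \<in> Gamma adj a p h1 \<inter> {y. 0 < y (i,j)}" using x xij by simp
    fix y assume y: "y \<in> Gamma adj a p h1 \<inter> {y. 0 < y (i,j)}"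
    hence yG: "y \<in> Gamma adj a p h1" and yij: "y (i,j) > 0" by auto
    have "Hfun a p y = a i j * p i j * y (i,j) / (vdeg y i * vdeg y j)"
      using F1[OF yG c h1 yij] by (elim conjE)
    thus "g y = Hfun a p y" unfolding g_def by simp
  qed
qed

lemma finite_H:
  assumes c: "\<And>i j. 0 \<le> a i j * p i j" and h1: "0 < h1"
  shows "finite (Hfun a p ` Gamma adj a p h1)"
proof -
  let ?G = "Gamma adj a p h1"
  let ?r = "\<lambda>S. Hfun a p (SOME z. z \<in> ?G \<and> {ij. z ij > 0} = S)"
  have "Hfun a p ` ?G \<subseteq> ?r ` UNIV"
  proof
    fix h assume "h \<in> Hfun a p ` ?G"
    then obtain x where x: "x \<in> ?G" and h: "h = Hfun a p x" by blast
    let ?S = "{ij. x ij > 0}"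
    have "\<exists>z. z \<in> ?G \<and> {ij. z ij > 0} = ?S" using x by blast
    hence z: "(SOME z. z \<in> ?G \<and> {ij. z ij > 0} = ?S) \<in> ?G \<and>
          {ij. (SOME z. z \<in> ?G \<and> {ij. z ij > 0} = ?S) ij > 0} = ?S"
      by (rule someI_ex)
    have "Hfun a p x = ?r ?S"
    proof (rule same_support[OF x _ c h1])
      show "(SOME z. z \<in> ?G \<and> {ij. z ij > 0} = ?S) \<in> ?G" using z by blast
      fix ij
      show "(x ij > 0) = ((SOME z. z \<in> ?G \<and> {ij. z ij > 0} = ?S) ij > 0)"
        using z by blast
    qed
    thus "h \<in> ?r ` UNIV" using h by blast
  qed
  moreover have "finite (?r ` UNIV)" by simp
  ultimately show ?thesis by (rule finite_subset)
qed

theorem proposition5: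
  fixes adj :: "'v::finite \<Rightarrow> 'v \<Rightarrow> bool"
    and a p :: "'v \<Rightarrow> 'v \<Rightarrow> real" and h1 :: real
  assumes "\<And>i j. adj i j = adj j i"
    and "\<And>i j. a i j = a j i" and "\<And>i j. a i j \<ge> 0"
    and "\<And>i j. a i j > 0 \<Longrightarrow> adj i j"
    and "\<And>i j. p i j = p j i" and "\<And>i j. 0 \<le> p i j \<and> p i j \<le> 1"
    and "\<And>i j. \<not> adj i j \<Longrightarrow> p i j = 0"
    and "\<exists>i j. a i j * p i j > 0"
    and "0 < h1" and "h1 \<le> 1"
    and "connected_component (Gamma adj a p h1) x y"
  shows "Hfun a p x = Hfun a p y"
proof -
  have c: "\<And>i j. 0 \<le> a i j * p i j"
    using assms(3) assms(6) by (simp add: mult_nonneg_nonneg)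
  obtain T where T: "connected T" "T \<subseteq> Gamma adj a p h1" "x \<in> T" "y \<in> T"
    using assms(11) unfolding connected_component_def by blast
  have "continuous_on T (Hfun a p)"
    using H_cont[where a=a and p=p and adj=adj, OF c assms(9)] T(2) by (rule continuous_on_subset)
  moreover have "finite (Hfun a p ` T)"
    using finite_H[where a=a and p=p and adj=adj, OF c assms(9)] T(2) by (meson finite_subset image_mono)
  ultimately have "Hfun a p constant_on T"
    using T(1) continuous_finite_range_constant by blast
  thus ?thesis using T(3,4) unfolding constant_on_def by metis
qed

end
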